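(* Let $\Gamma$ be a cofinite discrete subgroup of $\mathrm{SL}_2(\mathbb{R})$ with cusps, $r\in\mathbb{C}$, $v$ a multiplier system for weight $r$, $z_0\in\mathbb{H}$, and $F\in A_r(\Gamma,v)$. (i) The map $\gamma\mapsto\psi^{z_0}_{F,\gamma}$ is an element of $Z^1(\Gamma;\mathcal{D}^\omega_{v,2-r})$. (ii) The cohomology class of $\psi^{z_0}_F$ in $H^1(\Gamma;\mathcal{D}^\omega_{v,2-r})$ does not depend on $z_0$, so $F\mapsto[\psi^{z_0}_F]$ is a well-defined linear map $\mathrm{coh}^\omega_r:A_r(\Gamma,v)\to H^1(\Gamma;\mathcal{D}^\omega_{v,2-r})$. (iii) If $r\in\mathbb{Z}_{\ge2}$ then $\mathrm{coh}^\omega_r A_r(\Gamma,v)\subset H^1(\Gamma;\mathcal{D}^{\mathrm{pol}}_{v,2-r})$.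
   Context: $\mathbb{H}$ upper, $\mathbb{H}^-$ lower half-plane; $\Gamma\ni-I$ discrete, $\Gamma\backslash\mathbb{H}$ of finite volume and noncompact. Argument convention: $\arg(cz+d)\in(-\pi,\pi]$ for $z\in\mathbb{H}$, $[-\pi,\pi)$ for $z\in\mathbb{H}^-$. A multiplier system for weight $r$: $v:\Gamma\to\mathbb{C}^*$ with $j(\gamma,z)=v(\gamma)(cz+d)^r$ satisfying $j(\gamma\delta,z)=j(\gamma,\delta z)j(\delta,z)$, $j(-\gamma,z)=j(\gamma,z)$. $A_r(\Gamma,v)$: holomorphic $F$ on $\mathbb{H}$ with $v(\gamma)^{-1}(cz+d)^{-r}F(\gamma z)=F(z)$ for $\gamma=\begin{pmatrix}*&*\\c&d\end{pmatrix}\in\Gamma$. $\psi^{z_0}_{F,\gamma}(t)=\int_{\gamma^{-1}z_0}^{z_0}(z-t)^{r-2}F(z)dz$ for $t\in\mathbb{H}^-$, with $-\pi/2<\arg(z-t)<3\pi/2$. $\Gamma$ acts on functions on $\mathbb{H}^-$ by $(\varphi|_{v,2-r}\gamma)(t)=v(\gamma)^{-1}(ct+d)^{r-2}\varphi(\gamma t)$. $\mathcal{D}^\omega_{v,2-r}$: holomorphic $\varphi$ on $\mathbb{H}^-$ such that $(i-t)^{2-r}\varphi(t)$ ($\arg(i-t)\in(-\pi/2,3\pi/2)$) extends holomorphically to an open neighbourhood of $\mathbb{H}^-\cup\mathbb{P}^1(\mathbb{R})$ in $\mathbb{P}^1(\mathbb{C})$, with this action. For $r\in\mathbb{Z}_{\ge2}$,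 $\mathcal{D}^{\mathrm{pol}}_{v,2-r}$ is the submodule of polynomial functions of degree at most $r-2$; $H^1(\Gamma;\mathcal{D}^{\mathrm{pol}}_{v,2-r})$ is regarded via the natural map into $H^1(\Gamma;\mathcal{D}^\omega_{v,2-r})$ (statement (iii) means the cocycles take values in $\mathcal{D}^{\mathrm{pol}}_{v,2-r}$). *)

theory Defs
  imports "HOL-Complex_Analysis.Complex_Analysis" "HOL-Computational_Algebra.Polynomial"
begin

section \<open>2x2 real matrices (a,b,c,d) = [[a,b],[c,d]]\<close>

type_synonym mat2 = "real \<times> real \<times> real \<times> real"

definition mmul :: "mat2 \<Rightarrow> mat2 \<Rightarrow> mat2" where
  "mmul g h = (case g of (a,b,c,d) \<Rightarrow> case h of (a',b',c',d') \<Rightarrow>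
     (a*a' + b*c', a*b' + b*d', c*a' + d*c', c*b' + d*d'))"

definition mdet :: "mat2 \<Rightarrow> real" where
  "mdet g = (case g of (a,b,c,d) \<Rightarrow> a*d - b*c)"

(* inverse of a determinant-one matrix *)
definition minv :: "mat2 \<Rightarrow> mat2" where
  "minv g = (case g of (a,b,c,d) \<Rightarrow> (d, -b, -c, a))"

definition mneg :: "mat2 \<Rightarrow> mat2" where
  "mneg g = (case g of (a,b,c,d) \<Rightarrow> (-a, -b, -c, -d))"

definition I2 :: mat2 where "I2 = (1, 0, 0, 1)"

definition cdf :: "mat2 \<Rightarrow> complex \<Rightarrow> complex" where
  "cdf g z = (case g of (a,b,c,d) \<Rightarrow> of_real c * z + of_real d)"

definition moeb :: "mat2 \<Rightarrow> complex \<Rightarrow> complex" where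
  "moeb g z = (case g of (a,b,c,d) \<Rightarrow> (of_real a * z + of_real b) / (of_real c * z + of_real d))"

definition Upper :: "complex set" where "Upper = {z. 0 < Im z}"
definition Lower :: "complex set" where "Lower = {z. Im z < 0}"

definition discrete_subgroup_SL2 :: "mat2 set \<Rightarrow> bool" where
  "discrete_subgroup_SL2 \<Gamma> \<longleftrightarrow>
     (\<forall>g\<in>\<Gamma>. mdet g = 1) \<and> I2 \<in> \<Gamma> \<and>
     (\<forall>g\<in>\<Gamma>. \<forall>h\<in>\<Gamma>. mmul g h \<in> \<Gamma>) \<and> (\<forall>g\<in>\<Gamma>. minv g \<in> \<Gamma>) \<and>
     (\<forall>g\<in>\<Gamma>. \<exists>e>0. \<forall>h\<in>\<Gamma>. dist h g < e \<longrightarrow> h = g)"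

definition hyp_measure :: "complex measure" where
  "hyp_measure = density lborel (\<lambda>z. ennreal (1 / (Im z)\<^sup>2))"

definition fundamental_domain :: "mat2 set \<Rightarrow> complex set \<Rightarrow> bool" where
  "fundamental_domain \<Gamma> F \<longleftrightarrow>
     F \<in> sets lborel \<and> F \<subseteq> Upper \<and> (\<Union>g\<in>\<Gamma>. moeb g ` F) = Upper \<and>
     (\<forall>g\<in>\<Gamma>. g \<noteq> I2 \<and> g \<noteq> mneg I2 \<longrightarrow> F \<inter> moeb g ` F \<in> null_sets lborel)"

definition cofinite :: "mat2 set \<Rightarrow> bool" where
  "cofinite \<Gamma> \<longleftrightarrow> (\<exists>F. fundamental_domain \<Gamma> F \<and> emeasure hyp_measure F < \<infinity>)"

(* Gamma\H is not compact, i.e. no compact K \<subseteq> H has Gamma-translates covering H *)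
definition has_cusps :: "mat2 set \<Rightarrow> bool" where
  "has_cusps \<Gamma> \<longleftrightarrow> \<not> (\<exists>K. compact K \<and> K \<subseteq> Upper \<and> (\<Union>g\<in>\<Gamma>. moeb g ` K) = Upper)"

(* arg in (-pi, pi] : used for (cz+d)^r, z in H *)
definition pow_H :: "complex \<Rightarrow> complex \<Rightarrow> complex" where
  "pow_H z w = exp (w * Ln z)"

(* arg in [-pi, pi) : used for (ct+d)^s, t in lower half plane *)
definition arg_low :: "complex \<Rightarrow> real" where
  "arg_low z = (if Arg z = pi then - pi else Arg z)"

definition pow_L :: "complex \<Rightarrow> complex \<Rightarrow> complex" where
  "pow_L z w = exp (w * (of_real (ln (cmod z)) + \<i> * of_real (arg_low z)))"

(* arg in (-pi/2, 3pi/2) : used for (z-t)^s and (i-t)^s *)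
definition arg_strip :: "complex \<Rightarrow> real" where
  "arg_strip z = (if Arg z \<le> - pi / 2 then Arg z + 2 * pi else Arg z)"

definition pow_S :: "complex \<Rightarrow> complex \<Rightarrow> complex" where
  "pow_S z w = exp (w * (of_real (ln (cmod z)) + \<i> * of_real (arg_strip z)))"

definition jfac :: "(mat2 \<Rightarrow> complex) \<Rightarrow> complex \<Rightarrow> mat2 \<Rightarrow> complex \<Rightarrow> complex" where
  "jfac v r g z = v g * pow_H (cdf g z) r"

definition multiplier_system :: "mat2 set \<Rightarrow> complex \<Rightarrow> (mat2 \<Rightarrow> complex) \<Rightarrow> bool" where
  "multiplier_system \<Gamma> r v \<longleftrightarrow>
     (\<forall>g\<in>\<Gamma>. v g \<noteq> 0) \<and>
     (\<forall>g\<in>\<Gamma>. \<forall>h\<in>\<Gamma>. \<forall>z\<in>Upper. jfac v r (mmul g h) z = jfac v r g (moeb h z) * jfac v r h z) \<and>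
     (\<forall>g\<in>\<Gamma>. \<forall>z\<in>Upper. jfac v r (mneg g) z = jfac v r g z)"

definition A_r :: "mat2 set \<Rightarrow> (mat2 \<Rightarrow> complex) \<Rightarrow> complex \<Rightarrow> (complex \<Rightarrow> complex) \<Rightarrow> bool" where
  "A_r \<Gamma> v r F \<longleftrightarrow> F holomorphic_on Upper \<and>
     (\<forall>g\<in>\<Gamma>. \<forall>z\<in>Upper. inverse (v g) * pow_H (cdf g z) (- r) * F (moeb g z) = F z)"

(* psi^{z0}_{F,g}(t) = integral from g^-1 z0 to z0 of (z-t)^(r-2) F(z) dz
   (path independent in H; we take the straight segment, which lies in H) *)
definition psi :: "complex \<Rightarrow> (complex \<Rightarrow> complex) \<Rightarrow> complex \<Rightarrow> mat2 \<Rightarrow> complex \<Rightarrow> complex" where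
  "psi z0 F r g t = contour_integral (linepath (moeb (minv g) z0) z0) (\<lambda>z. pow_S (z - t) (r - 2) * F z)"

definition slash :: "(mat2 \<Rightarrow> complex) \<Rightarrow> complex \<Rightarrow> (complex \<Rightarrow> complex) \<Rightarrow> mat2 \<Rightarrow> complex \<Rightarrow> complex" where
  "slash v r \<phi> g t = inverse (v g) * pow_L (cdf g t) (r - 2) * \<phi> (moeb g t)"

(* phi \<in> D^omega_{v,2-r}: (i-t)^(2-r) phi(t) extends holomorphically to an open
   neighbourhood of the closed lower half plane together with \<infinity> in P^1(C) *)
definition D_omega :: "complex \<Rightarrow> (complex \<Rightarrow> complex) \<Rightarrow> bool" where
  "D_omega r \<phi> \<longleftrightarrow> \<phi> holomorphic_on Lower \<and>
     (\<exists>U g. open U \<and> {t. Im t \<le> 0} \<subseteq> U \<and> (\<exists>R. {t. R < cmod t} \<subseteq> U) \<and>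
        g holomorphic_on U \<and> (\<forall>t\<in>Lower. g t = pow_S (\<i> - t) (2 - r) * \<phi> t) \<and>
        (\<exists>L. (g \<longlongrightarrow> L) at_infinity))"

definition D_pol :: "nat \<Rightarrow> (complex \<Rightarrow> complex) \<Rightarrow> bool" where
  "D_pol n \<phi> \<longleftrightarrow> (\<exists>p :: complex poly. degree p \<le> n \<and> (\<forall>t\<in>Lower. \<phi> t = poly p t))"

definition cocycle :: "((complex \<Rightarrow> complex) \<Rightarrow> bool) \<Rightarrow> mat2 set \<Rightarrow> (mat2 \<Rightarrow> complex) \<Rightarrow> complex
    \<Rightarrow> (mat2 \<Rightarrow> complex \<Rightarrow> complex) \<Rightarrow> bool" where
  "cocycle M \<Gamma> v r c \<longleftrightarrow> (\<forall>g\<in>\<Gamma>. M (c g)) \<and>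
     (\<forall>g\<in>\<Gamma>. \<forall>h\<in>\<Gamma>. \<forall>t\<in>Lower. c (mmul g h) t = slash v r (c g) h t + c h t)"

definition coboundary :: "((complex \<Rightarrow> complex) \<Rightarrow> bool) \<Rightarrow> mat2 set \<Rightarrow> (mat2 \<Rightarrow> complex) \<Rightarrow> complex
    \<Rightarrow> (mat2 \<Rightarrow> complex \<Rightarrow> complex) \<Rightarrow> bool" where
  "coboundary M \<Gamma> v r c \<longleftrightarrow> (\<exists>\<phi>. M \<phi> \<and> (\<forall>g\<in>\<Gamma>. \<forall>t\<in>Lower. c g t = slash v r \<phi> g t - \<phi> t))"

end

theory Submission
  imports Defs
begin


lemma convex_Upper: "convex Upper"
  unfolding Upper_def using convex_halfspace_Im_gt[of 0] by simp
lemma open_Upper: "open Upper"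
  unfolding Upper_def using open_halfspace_Im_gt[of 0] by simp
lemma open_Lower: "open Lower"
  unfolding Lower_def using open_halfspace_Im_lt[of 0] by simp

definition LS :: "complex \<Rightarrow> complex" where
  "LS w = of_real (ln (cmod w)) + \<i> * of_real (arg_strip w)"
definition LL :: "complex \<Rightarrow> complex" where
  "LL w = of_real (ln (cmod w)) + \<i> * of_real (arg_low w)"

lemma pow_S_LS: "pow_S w s = exp (s * LS w)" by (simp add: pow_S_def LS_def)
lemma pow_L_LL: "pow_L w s = exp (s * LL w)" by (simp add: pow_L_def LL_def)

lemma Ln_split: "z \<noteq> 0 \<Longrightarrow> Ln z = of_real (ln (cmod z)) + \<i> * of_real (Arg z)"
  by (rule complex_eqI) (simp_all add: Arg_eq_Im_Ln)

lemma LS_upper: "0 < Im w \<Longrightarrow> LS w = Ln w"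
proof -
  assume "0 < Im w"
  then have "0 < Arg w" "w \<noteq> 0" using Arg_lt_pi by auto
  moreover have "\<not> Arg w \<le> - pi / 2" using \<open>0 < Arg w\<close> pi_gt_zero by linarith
  ultimately have "arg_strip w = Arg w" unfolding arg_strip_def by simp
  then show ?thesis using \<open>w \<noteq> 0\<close> by (simp add: LS_def Ln_split)
qed

lemma pow_S_upper: "0 < Im w \<Longrightarrow> pow_S w s = exp (s * Ln w)"
  by (simp add: pow_S_LS LS_upper)

lemma exp_LS: assumes "w \<noteq> 0" shows "exp (LS w) = w"
proof (cases "Arg w \<le> - pi / 2")
  case True
  then have "LS w = Ln w + 2 * pi * \<i>" using assms
    by (simp add: LS_def arg_strip_def Ln_split algebra_simps)
  then show ?thesis using assms by (simp add: exp_add)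
next
  case False
  then have "LS w = Ln w" using assms by (simp add: LS_def arg_strip_def Ln_split)
  then show ?thesis using assms by simp
qed

lemma exp_LL: assumes "w \<noteq> 0" shows "exp (LL w) = w"
proof (cases "Arg w = pi")
  case True
  then have "LL w = Ln w - 2 * pi * \<i>" using assms
    by (simp add: LL_def arg_low_def Ln_split algebra_simps)
  then show ?thesis using assms by (simp add: exp_diff)
next
  case False
  then have "LL w = Ln w" using assms by (simp add: LL_def arg_low_def Ln_split)
  then show ?thesis using assms by simp
qed

lemma Im_LS_upper: "0 < Im w \<Longrightarrow> 0 < Im (LS w) \<and> Im (LS w) < pi"
  using LS_upper Arg_lt_pi Arg_eq_Im_Ln by (metis complex.sel(2) zero_complex.sel(2) less_irrefl)

lemma branch:
  assumes "0 < Im q" "0 < Im y" "p \<noteq> 0" "m \<noteq> 0" "q * p * m = y"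
    "- pi < arg_low m + Arg p" "arg_low m + Arg p < pi"
  shows "pow_L m s * pow_S q s * pow_H p s = pow_S y s"
proof -
  have q0: "q \<noteq> 0" using assms(1) by auto
  have "exp (LL m + LS q + Ln p) = m * q * p"
    using assms q0 by (simp add: exp_add exp_LS exp_LL)
  also have "\<dots> = y" using assms(5) by (simp add: algebra_simps)
  also have "\<dots> = exp (LS y)" using assms(2) by (subst exp_LS) auto
  finally obtain n :: int where n: "LL m + LS q + Ln p = LS y + (of_int (2 * n) * pi) * \<i>"
    using exp_eq by blast
  have "Im (LL m + LS q + Ln p) = arg_low m + Im (LS q) + Arg p"
    using assms by (simp add: LL_def Arg_eq_Im_Ln)
  moreover have "Im (LS y + (of_int (2 * n) * pi) * \<i>) = Im (LS y) + 2 * n * pi"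
    by simp
  ultimately have "arg_low m + Im (LS q) + Arg p = Im (LS y) + 2 * n * pi"
    using n by simp
  moreover have "0 < Im (LS q)" "Im (LS q) < pi" "0 < Im (LS y)" "Im (LS y) < pi"
    using Im_LS_upper assms by auto
  ultimately have "real_of_int n * (2 * pi) < 1 * (2 * pi)" "(-1) * (2 * pi) < real_of_int n * (2 * pi)"
    using assms(6,7) by linarith+
  then have "real_of_int n < 1" "-1 < real_of_int n" using pi_gt_zero
    using mult_right_less_imp_less[of "real_of_int n" "2*pi" 1] mult_right_less_imp_less[of "-1" "2*pi" "real_of_int n"] by auto
  then have "n = 0" by linarith
  then have "LL m + LS q + Ln p = LS y" using n by simp
  then show ?thesis
    by (simp add: pow_L_LL pow_S_LS pow_H_def flip: exp_add) (metis distrib_left)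
qed



lemma mdet_mmul: "mdet (mmul g h) = mdet g * mdet h"
  by (cases g; cases h) (auto simp: mdet_def mmul_def algebra_simps)
lemma mdet_minv: "mdet (minv g) = mdet g"
  by (cases g) (auto simp: mdet_def minv_def algebra_simps)
lemma minv_mmul: "minv (mmul g h) = mmul (minv h) (minv g)"
  by (cases g; cases h) (auto simp: minv_def mmul_def algebra_simps)

lemma cdf_nz: assumes "mdet h = 1" "Im z \<noteq> 0" shows "cdf h z \<noteq> 0"
proof -
  obtain a b c d where h: "h = (a,b,c,d)" by (cases h) auto
  show ?thesis
  proof
    assume "cdf h z = 0"
    then have e: "of_real c * z + of_real d = 0" by (simp add: h cdf_def)
    have "Im (of_real c * z + of_real d) = c * Im z" by simp
    then have "c * Im z = 0" using e by simp
    then have "c = 0" using assms by simp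
    then have "d = 0" using e by simp
    then show False using assms \<open>c = 0\<close> by (simp add: h mdet_def)
  qed
qed

lemma Im_moeb: assumes "mdet h = 1" "cdf h z \<noteq> 0"
  shows "Im (moeb h z) = Im z / (cmod (cdf h z))\<^sup>2"
proof -
  obtain a b c d where h: "h = (a,b,c,d)" by (cases h) auto
  have det: "a*d - b*c = 1" using assms by (simp add: h mdet_def)
  have "Im (moeb h z) = (Im (of_real a * z + of_real b) * Re (of_real c * z + of_real d) -
          Re (of_real a * z + of_real b) * Im (of_real c * z + of_real d)) / (cmod (cdf h z))\<^sup>2"
    by (simp add: h moeb_def cdf_def Im_divide cmod_power2)
  also have "Im (of_real a * z + of_real b) * Re (of_real c * z + of_real d) -
          Re (of_real a * z + of_real b) * Im (of_real c * z + of_real d) = (a*d - b*c) * Im z"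
    by (simp add: algebra_simps)
  finally show ?thesis using det by simp
qed

lemma moeb_Upper: "mdet h = 1 \<Longrightarrow> z \<in> Upper \<Longrightarrow> moeb h z \<in> Upper"
  using Im_moeb cdf_nz by (fastforce simp: Upper_def)
lemma moeb_Lower: "mdet h = 1 \<Longrightarrow> z \<in> Lower \<Longrightarrow> moeb h z \<in> Lower"
  using Im_moeb cdf_nz by (fastforce simp: Lower_def divide_neg_pos)

lemma dd: "(p::complex) \<noteq> 0 \<Longrightarrow> (X / p) / (Y / p) = X / Y"
  by (simp add: divide_inverse mult.commute mult.left_commute)

lemma moeb_mmul: assumes "mdet h = 1" "Im z \<noteq> 0" "mdet g = 1"
  shows "moeb (mmul g h) z = moeb g (moeb h z)"
proof -
  obtain a b c d where h: "h = (a,b,c,d)" by (cases h) auto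
  obtain a' b' c' d' where g: "g = (a',b',c',d')" by (cases g) auto
  have n1: "of_real c * z + of_real d \<noteq> 0" using cdf_nz[OF assms(1,2)] by (simp add: h cdf_def)
  have "cdf (mmul g h) z \<noteq> 0" using cdf_nz[of "mmul g h" z] assms by (simp add: mdet_mmul)
  then have n2: "of_real (c' * a + d' * c) * z + of_real (c' * b + d' * d) \<noteq> 0"
    by (simp add: h g cdf_def mmul_def)
  have n3: "of_real c' * ((of_real a * z + of_real b) / (of_real c * z + of_real d)) + of_real d' \<noteq> 0"
  proof
    assume "of_real c' * ((of_real a * z + of_real b) / (of_real c * z + of_real d)) + of_real d' = 0"
    then have "of_real c' * (of_real a * z + of_real b) + of_real d' * (of_real c * z + of_real d) = 0"
      using n1 by (simp add: field_simps)
    then show False using n2 by (simp add: algebra_simps)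
  qed
  define u where "u = of_real a * z + of_real b"
  define p where "p = of_real c * z + of_real d"
  have p0: "p \<noteq> 0" using n1 by (simp add: p_def)
  have e1: "of_real a' * (u / p) + of_real b' = (of_real a' * u + of_real b' * p) / p"
    using p0 by (simp add: field_simps)
  have e2: "of_real c' * (u / p) + of_real d' = (of_real c' * u + of_real d' * p) / p"
    using p0 by (simp add: field_simps)
  have mh: "moeb h z = u / p" by (simp add: h moeb_def u_def p_def)
  have "moeb g (moeb h z) = (of_real a' * (u / p) + of_real b') / (of_real c' * (u / p) + of_real d')"
    unfolding mh by (simp only: g moeb_def prod.case)
  also have "\<dots> = (of_real a' * u + of_real b' * p) / (of_real c' * u + of_real d' * p)"
    unfolding e1 e2 using p0 by (rule dd)
  also have "\<dots> = moeb (mmul g h) z"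
    by (simp add: g h moeb_def mmul_def u_def p_def algebra_simps)
  finally show ?thesis by simp
qed

lemma moeb_minv: assumes "mdet h = 1" "Im z \<noteq> 0" shows "moeb h (moeb (minv h) z) = z"
proof -
  have "moeb (mmul h (minv h)) z = z"
    by (cases h) (simp add: mmul_def minv_def moeb_def mdet_def, use assms in \<open>simp add: mdet_def algebra_simps flip: of_real_mult of_real_diff\<close>)
  then show ?thesis using moeb_mmul[of "minv h" z h] assms by (simp add: mdet_minv)
qed

lemma moeb_diff: assumes "mdet h = 1" "cdf h w \<noteq> 0" "cdf h t \<noteq> 0"
  shows "moeb h w - moeb h t = (w - t) / (cdf h w * cdf h t)"
proof -
  obtain a b c d where h: "h = (a,b,c,d)" by (cases h) auto
  have det: "of_real a * of_real d - of_real b * of_real c = (1::complex)"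
    using assms by (simp add: h mdet_def flip: of_real_mult of_real_diff)
  have n: "of_real c * w + of_real d \<noteq> 0" "of_real c * t + of_real d \<noteq> 0"
    using assms by (auto simp: h cdf_def)
  have "moeb h w - moeb h t = ((of_real a * w + of_real b) * (of_real c * t + of_real d) -
      (of_real a * t + of_real b) * (of_real c * w + of_real d)) / (cdf h w * cdf h t)"
    using n by (simp add: h moeb_def cdf_def field_simps)
  also have "(of_real a * w + of_real b) * (of_real c * t + of_real d) -
      (of_real a * t + of_real b) * (of_real c * w + of_real d) = 
      (of_real a * of_real d - of_real b * of_real c) * (w - t)"
    by (simp add: algebra_simps)
  finally show ?thesis using det by simp
qed

lemma moeb_deriv: assumes "mdet h = 1" "cdf h w \<noteq> 0"
  shows "(moeb h has_field_derivative 1 / (cdf h w)\<^sup>2) (at w)"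
proof -
  obtain a b c d where h: "h = (a,b,c,d)" by (cases h) auto
  have det: "of_real a * of_real d - of_real b * of_real c = (1::complex)"
    using assms by (simp add: h mdet_def flip: of_real_mult of_real_diff)
  have n: "of_real c * w + of_real d \<noteq> 0" using assms by (auto simp: h cdf_def)
  have "((\<lambda>w. (of_real a * w + of_real b) / (of_real c * w + of_real d)) has_field_derivative
     ((of_real a * (of_real c * w + of_real d) - (of_real a * w + of_real b) * of_real c) / (of_real c * w + of_real d)^2)) (at w)"
    using n by (auto intro!: derivative_eq_intros simp: power2_eq_square)
  moreover have "(of_real a * (of_real c * w + of_real d) - (of_real a * w + of_real b) * of_real c)
      = (of_real a * of_real d - of_real b * of_real c :: complex)" by (simp add: algebra_simps)
  moreover have "moeb h = (\<lambda>w. (of_real a * w + of_real b) / (of_real c * w + of_real d))"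
    by (rule ext) (simp add: h moeb_def)
  ultimately show ?thesis using det by (simp add: h cdf_def)
qed



definition Iint :: "(complex \<Rightarrow> complex) \<Rightarrow> complex \<Rightarrow> complex \<Rightarrow> complex \<Rightarrow> complex \<Rightarrow> complex" where
  "Iint F r t A B = contour_integral (linepath A B) (\<lambda>z. pow_S (z - t) (r - 2) * F z)"

lemma psi_Iint: "psi z0 F r g t = Iint F r t (moeb (minv g) z0) z0"
  by (simp add: psi_def Iint_def)

lemma integrand_holo:
  assumes "F holomorphic_on Upper" "t \<in> Lower"
  shows "(\<lambda>z. pow_S (z - t) (r - 2) * F z) holomorphic_on Upper"
proof -
  have "(\<lambda>z. exp ((r - 2) * Ln (z - t)) * F z) holomorphic_on Upper"
    using assms by (auto intro!: holomorphic_intros simp: complex_nonpos_Reals_iff Upper_def Lower_def)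
  moreover have "\<And>z. z \<in> Upper \<Longrightarrow> exp ((r - 2) * Ln (z - t)) * F z = pow_S (z - t) (r - 2) * F z"
    using assms by (subst pow_S_upper) (auto simp: Upper_def Lower_def)
  ultimately show ?thesis by (rule holomorphic_transform)
qed

lemma prim_exists:
  assumes "f holomorphic_on Upper"
  obtains P where "\<And>x. x \<in> Upper \<Longrightarrow> (P has_field_derivative f x) (at x)"
proof -
  obtain P where "\<And>x. x \<in> Upper \<Longrightarrow> (P has_field_derivative f x) (at x within Upper)"
    using holomorphic_convex_primitive'[OF convex_Upper open_Upper assms] by blast
  then show ?thesis using that at_within_open[OF _ open_Upper] by metis
qed

lemma integral_prim:
  assumes "\<And>x. x \<in> Upper \<Longrightarrow> (P has_field_derivative f x) (at x)" "A \<in> Upper" "B \<in> Upper"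
  shows "contour_integral (linepath A B) f = P B - P A"
proof -
  have "(f has_contour_integral (P (pathfinish (linepath A B)) - P (pathstart (linepath A B)))) (linepath A B)"
    by (rule contour_integral_primitive[of Upper]) 
       (use assms closed_segment_subset[OF assms(2,3) convex_Upper] in \<open>auto intro: has_field_derivative_at_within\<close>)
  then show ?thesis by (simp add: contour_integral_unique)
qed

lemma arg_cond:
  assumes "mdet h = 1" "w \<in> Upper" "t \<in> Lower"
  shows "- pi < arg_low (cdf h t) + Arg (cdf h w) \<and> arg_low (cdf h t) + Arg (cdf h w) < pi"
proof -
  obtain a b c d where h: "h = (a,b,c,d)" by (cases h) auto
  have iw: "Im (cdf h w) = c * Im w" and it: "Im (cdf h t) = c * Im t" by (simp_all add: h cdf_def)
  have w: "Im w > 0" and t: "Im t < 0" using assms by (auto simp: Upper_def Lower_def)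
  consider "c > 0" | "c < 0" | "c = 0" by linarith
  then show ?thesis
  proof cases
    case 1
    then have "Im (cdf h w) > 0" "Im (cdf h t) < 0" using iw it w t by (auto simp: mult_pos_neg)
    then have "0 < Arg (cdf h w)" "Arg (cdf h w) < pi" "Arg (cdf h t) < 0" "- pi < Arg (cdf h t)"
      using Arg_lt_pi[of "cdf h w"] Arg_neg_iff[of "cdf h t"] Arg_bounded[of "cdf h t"] by auto
    then show ?thesis by (simp add: arg_low_def)
  next
    case 2
    then have "Im (cdf h w) < 0" "Im (cdf h t) > 0" using iw it w t by (auto simp: mult_neg_pos mult_neg_neg)
    then have "0 < Arg (cdf h t)" "Arg (cdf h t) < pi" "Arg (cdf h w) < 0" "- pi < Arg (cdf h w)"
      using Arg_lt_pi[of "cdf h t"] Arg_neg_iff[of "cdf h w"] Arg_bounded[of "cdf h w"] by auto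
    then show ?thesis by (simp add: arg_low_def)
  next
    case 3
    then have d: "d \<noteq> 0" using assms by (auto simp: h mdet_def)
    have e: "cdf h w = of_real d" "cdf h t = of_real d" using 3 by (simp_all add: h cdf_def)
    have "arg_low (of_real d) + Arg (of_real d) = 0" using d by (simp add: arg_low_def)
    then show ?thesis using pi_gt_zero by (simp add: e)
  qed
qed

lemma pow_H_minus2: assumes "p \<noteq> 0" shows "pow_H p r * (1 / p\<^sup>2) = pow_H p (r - 2)"
proof -
  have "p\<^sup>2 = exp (Ln p) * exp (Ln p)" using assms by (simp add: power2_eq_square)
  also have "\<dots> = exp (2 * Ln p)" by (simp only: exp_add[symmetric] mult_2)
  finally have "p\<^sup>2 = exp (2 * Ln p)" .
  then have "pow_H p r * (1 / p\<^sup>2) = exp (r * Ln p) / exp (2 * Ln p)" by (simp add: pow_H_def)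
  also have "\<dots> = exp (r * Ln p - 2 * Ln p)" by (rule exp_diff[symmetric])
  finally show ?thesis by (simp add: pow_H_def left_diff_distrib)
qed

lemma cancel2: "a \<noteq> 0 \<Longrightarrow> b \<noteq> 0 \<Longrightarrow> (a*b)*(inverse a * inverse b * X) = (X::complex)"
proof -
  assume "a \<noteq> 0" "b \<noteq> 0"
  have "(a*b)*(inverse a * inverse b * X) = (a * inverse a) * (b * inverse b) * X" by (simp only: mult_ac)
  then show ?thesis using \<open>a \<noteq> 0\<close> \<open>b \<noteq> 0\<close> by simp
qed

lemma KP:
  assumes "mdet h = 1" "v h \<noteq> 0"
    and hA: "\<And>z. z \<in> Upper \<Longrightarrow> inverse (v h) * pow_H (cdf h z) (- r) * F (moeb h z) = F z"
    and w: "w \<in> Upper" and t: "t \<in> Lower"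
  shows "inverse (v h) * pow_L (cdf h t) (r - 2) * (pow_S (moeb h w - moeb h t) (r - 2) * F (moeb h w))
          * (1 / (cdf h w)\<^sup>2) = pow_S (w - t) (r - 2) * F w"
proof -
  define p where "p = cdf h w"
  define m where "m = cdf h t"
  define q where "q = moeb h w - moeb h t"
  have p0: "p \<noteq> 0" and m0: "m \<noteq> 0" using cdf_nz[OF assms(1)] w t unfolding p_def m_def Upper_def Lower_def by auto
  have qe: "q = (w - t) / (p * m)" using moeb_diff[OF assms(1)] p0 m0 by (simp add: q_def p_def m_def)
  have qpm: "q * p * m = w - t" using qe p0 m0 by simp
  have Imq: "0 < Im q" using moeb_Upper[OF assms(1) w] moeb_Lower[OF assms(1) t]
    by (simp add: q_def Upper_def Lower_def)
  have Imy: "0 < Im (w - t)" using w t by (simp add: Upper_def Lower_def)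
  have Fh: "F (moeb h w) = v h * pow_H p r * F w"
  proof -
    have "inverse (v h) * inverse (pow_H p r) * F (moeb h w) = F w"
      using hA[OF w] by (simp add: p_def pow_H_def exp_minus)
    moreover have "pow_H p r \<noteq> 0" by (simp add: pow_H_def)
    ultimately show ?thesis using assms(2) cancel2[of "v h" "pow_H p r" "F (moeb h w)"] by simp
  qed
  have br: "pow_L m (r - 2) * pow_S q (r - 2) * pow_H p (r - 2) = pow_S (w - t) (r - 2)"
    by (rule branch[OF Imq Imy p0 m0 qpm]) (use arg_cond[OF assms(1) w t] in \<open>auto simp: p_def m_def\<close>)
  have "inverse (v h) * pow_L m (r - 2) * (pow_S q (r - 2) * F (moeb h w)) * (1 / p\<^sup>2)
     = pow_L m (r - 2) * pow_S q (r - 2) * (pow_H p r * (1 / p\<^sup>2)) * F w"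
    using assms(2) by (simp add: Fh ac_simps)
  also have "\<dots> = pow_L m (r - 2) * pow_S q (r - 2) * pow_H p (r - 2) * F w" by (simp only: pow_H_minus2[OF p0])
  also have "\<dots> = pow_S (w - t) (r - 2) * F w" by (simp only: br)
  finally show ?thesis by (simp only: p_def m_def q_def)
qed

lemma key:
  assumes "mdet h = 1" "v h \<noteq> 0"
    and hA: "\<And>z. z \<in> Upper \<Longrightarrow> inverse (v h) * pow_H (cdf h z) (- r) * F (moeb h z) = F z"
    and Fh: "F holomorphic_on Upper"
    and t: "t \<in> Lower" and A: "A \<in> Upper" and B: "B \<in> Upper"
  shows "inverse (v h) * pow_L (cdf h t) (r - 2) * Iint F r (moeb h t) A B
       = Iint F r t (moeb (minv h) A) (moeb (minv h) B)"
proof -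
  define C where "C = inverse (v h) * pow_L (cdf h t) (r - 2)"
  have ht: "moeb h t \<in> Lower" using moeb_Lower assms by blast
  obtain P where P: "\<And>x. x \<in> Upper \<Longrightarrow> (P has_field_derivative (pow_S (x - moeb h t) (r - 2) * F x)) (at x)"
    using prim_exists[OF integrand_holo[OF Fh ht]] by blast
  have Q: "((\<lambda>w. C * P (moeb h w)) has_field_derivative (pow_S (w - t) (r - 2) * F w)) (at w)"
    if w: "w \<in> Upper" for w
  proof -
    have hw: "moeb h w \<in> Upper" using moeb_Upper[OF assms(1) w] .
    have cw: "cdf h w \<noteq> 0" using cdf_nz[OF assms(1)] w by (auto simp: Upper_def)
    have "((\<lambda>w. C * P (moeb h w)) has_field_derivative
        C * ((pow_S (moeb h w - moeb h t) (r - 2) * F (moeb h w)) * (1 / (cdf h w)\<^sup>2))) (at w)"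
      by (rule DERIV_cmult[OF DERIV_chain2[OF P[OF hw] moeb_deriv[OF assms(1) cw]]])
    moreover have "C * ((pow_S (moeb h w - moeb h t) (r - 2) * F (moeb h w)) * (1 / (cdf h w)\<^sup>2))
        = pow_S (w - t) (r - 2) * F w"
      using KP[of h v r F w t, OF assms(1,2) hA w t] by (simp only: C_def mult.assoc)
    ultimately show ?thesis by simp
  qed
  have A': "moeb (minv h) A \<in> Upper" and B': "moeb (minv h) B \<in> Upper"
    using moeb_Upper A B assms(1) by (auto simp: mdet_minv)
  have "Iint F r t (moeb (minv h) A) (moeb (minv h) B) = C * P (moeb h (moeb (minv h) B)) - C * P (moeb h (moeb (minv h) A))"
    unfolding Iint_def by (rule integral_prim[OF Q A' B'])
  also have "\<dots> = C * (P B - P A)"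
    using moeb_minv[OF assms(1), of A] moeb_minv[OF assms(1), of B] A B by (simp add: Upper_def right_diff_distrib)
  also have "P B - P A = Iint F r (moeb h t) A B"
    unfolding Iint_def by (rule integral_prim[OF P A B, symmetric])
  finally show ?thesis unfolding C_def by (rule sym)
qed



lemma param_holo:
  fixes \<phi> \<phi>' :: "complex \<Rightarrow> complex \<Rightarrow> complex" and F :: "complex \<Rightarrow> complex"
  assumes W: "open W"
    and dphi: "\<And>z s. z \<in> closed_segment A B \<Longrightarrow> s \<in> W \<Longrightarrow> ((\<phi> z) has_field_derivative \<phi>' z s) (at s)"
    and cphi: "continuous_on (closed_segment A B \<times> W) (\<lambda>p. \<phi> (fst p) (snd p))"
    and cphi': "continuous_on (closed_segment A B \<times> W) (\<lambda>p. \<phi>' (fst p) (snd p))"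
    and nz: "\<And>z s. z \<in> closed_segment A B \<Longrightarrow> s \<in> W \<Longrightarrow> \<phi> z s \<notin> \<real>\<^sub>\<le>\<^sub>0"
    and cF: "continuous_on (closed_segment A B) F"
  shows "(\<lambda>s. contour_integral (linepath A B) (\<lambda>z. exp (c * Ln (\<phi> z s)) * F z)) holomorphic_on W"
proof -
  define K where "K s x = exp (c * Ln (\<phi> (linepath A B x) s)) * F (linepath A B x) * (B - A)" for s x
  define Kx where "Kx s x = exp (c * Ln (\<phi> (linepath A B x) s)) * (c * (\<phi>' (linepath A B x) s / \<phi> (linepath A B x) s))
      * F (linepath A B x) * (B - A)" for s x
  have eq: "(\<lambda>s. contour_integral (linepath A B) (\<lambda>z. exp (c * Ln (\<phi> z s)) * F z)) = (\<lambda>s. integral (cbox 0 1) (K s))"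
    unfolding contour_integral_integral K_def vector_derivative_linepath_at cbox_interval by (rule refl)
  have lin: "linepath A B x \<in> closed_segment A B" if "x \<in> cbox 0 1" for x :: real
    using that by (auto simp: linepath_in_path)
  have cl: "continuous_on (cbox 0 (1::real)) (linepath A B)"
    by (simp add: linepath_def continuous_intros)
  have "(\<lambda>s. integral (cbox 0 1) (K s)) analytic_on W"
    unfolding analytic_on_def
  proof
    fix s0 assume "s0 \<in> W"
    then obtain e where e: "e > 0" "ball s0 e \<subseteq> W" using W openE by blast
    have "(\<lambda>s. integral (cbox 0 1) (K s)) holomorphic_on ball s0 e"
    proof (rule leibniz_rule_holomorphic[where fx = Kx])
      fix s x assume s: "s \<in> ball s0 e" and x: "(x::real) \<in> cbox 0 1"
      have sW: "s \<in> W" using s e by auto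
      have nz': "\<phi> (linepath A B x) s \<notin> \<real>\<^sub>\<le>\<^sub>0" using nz[OF lin[OF x] sW] .
      then have n0: "\<phi> (linepath A B x) s \<noteq> 0" by auto
      have "((\<lambda>s. K s x) has_field_derivative Kx s x) (at s)"
        unfolding K_def Kx_def
        by (rule derivative_eq_intros DERIV_chain2[OF has_field_derivative_Ln[OF nz'] dphi[OF lin[OF x] sW]] refl | simp add: divide_inverse)+
      then show "((\<lambda>s. K s x) has_field_derivative Kx s x) (at s within ball s0 e)"
        by (rule has_field_derivative_at_within)
    next
      fix s assume s: "s \<in> ball s0 e"
      have sW: "s \<in> W" using s e by auto
      have c1: "continuous_on (cbox 0 1) (\<lambda>x. \<phi> (linepath A B x) s)"
        by (rule continuous_on_compose2[OF cphi, of _ "\<lambda>x. (linepath A B x, s)", simplified])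
           (use cl sW lin in \<open>auto intro!: continuous_intros\<close>)
      have c2: "continuous_on (cbox 0 1) (\<lambda>x. F (linepath A B x))"
        by (rule continuous_on_compose2[OF cF cl]) (use lin in auto)
      have "continuous_on (cbox 0 1) (K s)"
        unfolding K_def using c1 c2 nz lin sW by (auto intro!: continuous_intros)
      then show "K s integrable_on cbox 0 1" by (rule integrable_continuous)
    next
      have sub: "(\<lambda>p. (linepath A B (snd p), fst p)) ` (ball s0 e \<times> cbox 0 1) \<subseteq> closed_segment A B \<times> W"
        using lin e by auto
      have cp: "continuous_on (ball s0 e \<times> cbox 0 1) (\<lambda>p. (linepath A B (snd p), fst p))"
        by (intro continuous_intros continuous_on_compose2[OF cl]) auto
      have c1: "continuous_on (ball s0 e \<times> cbox 0 1) (\<lambda>p. \<phi> (linepath A B (snd p)) (fst p))"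
        using continuous_on_compose2[OF cphi cp sub] by simp
      have c1': "continuous_on (ball s0 e \<times> cbox 0 1) (\<lambda>p. \<phi>' (linepath A B (snd p)) (fst p))"
        using continuous_on_compose2[OF cphi' cp sub] by simp
      have c2: "continuous_on (ball s0 e \<times> cbox 0 1) (\<lambda>p. F (linepath A B (snd p)))"
        by (rule continuous_on_compose2[OF cF]) (use lin in \<open>auto intro!: continuous_intros continuous_on_compose2[OF cl]\<close>)
      have nzp: "\<And>p. p \<in> ball s0 e \<times> cbox 0 1 \<Longrightarrow> \<phi> (linepath A B (snd p)) (fst p) \<notin> \<real>\<^sub>\<le>\<^sub>0"
        using nz lin e by auto
      then have nzp0: "\<And>p. p \<in> ball s0 e \<times> cbox 0 1 \<Longrightarrow> \<phi> (linepath A B (snd p)) (fst p) \<noteq> 0"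
        by (metis nonpos_Reals_zero_I)
      have "continuous_on (ball s0 e \<times> cbox 0 1) (\<lambda>p. Kx (fst p) (snd p))"
        unfolding Kx_def using c1 c1' c2 nzp nzp0 by (intro continuous_intros) auto
      then show "continuous_on (ball s0 e \<times> cbox 0 1) (\<lambda>(s, x). Kx s x)"
        by (simp add: case_prod_beta')
    qed auto
    then show "\<exists>e>0. (\<lambda>s. integral (cbox 0 1) (K s)) holomorphic_on ball s0 e" using e by blast
  qed
  then show ?thesis unfolding eq by (rule analytic_imp_holomorphic)
qed



lemma ratio_H: assumes "0 < Im x" "0 < Im y" shows "x / y \<notin> \<real>\<^sub>\<le>\<^sub>0"
proof
  assume "x / y \<in> \<real>\<^sub>\<le>\<^sub>0"
  then obtain a where a: "x / y = of_real a" "a \<le> 0" by (auto elim!: nonpos_Reals_cases)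
  have "y \<noteq> 0" using assms by auto
  then have "x = of_real a * y" using a by (simp add: field_simps)
  then have "Im x = a * Im y" by simp
  moreover have "a * Im y \<le> 0" using a assms by (simp add: mult_nonpos_nonneg)
  ultimately show False using assms by simp
qed

lemma Ln_ratio: assumes "0 < Im x" "0 < Im y" shows "Ln (x / y) = Ln x - Ln y"
proof -
  have x0: "x \<noteq> 0" and y0: "y \<noteq> 0" using assms by auto
  have yn: "y \<notin> \<real>\<^sub>\<le>\<^sub>0" using assms by (auto simp: complex_nonpos_Reals_iff)
  have ax: "0 < Im (Ln x)" "Im (Ln x) < pi" using Arg_lt_pi[of x] assms x0 by (auto simp: Arg_eq_Im_Ln)
  have ay: "0 < Im (Ln y)" "Im (Ln y) < pi" using Arg_lt_pi[of y] assms y0 by (auto simp: Arg_eq_Im_Ln)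
  have "Ln (x * inverse y) = Ln x + Ln (inverse y)"
    by (rule Ln_times_simple) (use x0 y0 ax ay Ln_inverse[OF yn] in auto)
  then show ?thesis by (simp add: divide_inverse Ln_inverse[OF yn])
qed

lemma D_omega_Iint:
  assumes Fh: "F holomorphic_on Upper" and A: "A \<in> Upper" and B: "B \<in> Upper"
  shows "D_omega r (\<lambda>t. Iint F r t A B)"
proof -
  define S where "S = closed_segment A B"
  have SU: "S \<subseteq> Upper" using closed_segment_subset[OF A B convex_Upper] S_def by simp
  have cS: "compact S" "S \<noteq> {}" by (auto simp: S_def)
  have cF: "continuous_on S F"
    using holomorphic_on_imp_continuous_on[OF Fh] SU continuous_on_subset by blast
  obtain x0 where x0: "x0 \<in> S" "\<forall>y\<in>S. Im x0 \<le> Im y"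
    using continuous_attains_inf[OF cS, of Im] continuous_on_Im[OF continuous_on_id, of S] by auto
  define \<delta> where "\<delta> = min (Im x0) 1"
  have \<delta>: "0 < \<delta>" "\<delta> \<le> 1" "\<And>z. z \<in> S \<Longrightarrow> \<delta> \<le> Im z"
    using x0 SU by (auto simp: \<delta>_def Upper_def)
  obtain M where M: "\<And>z. z \<in> S \<Longrightarrow> cmod z \<le> M"
    using compact_imp_bounded[OF cS(1)] bounded_iff by blast
  define K0 where "K0 = max M 0 + 1"
  have K0: "1 \<le> K0" "\<And>z. z \<in> S \<Longrightarrow> cmod (z - \<i>) \<le> K0"
  proof -
    show "1 \<le> K0" by (simp add: K0_def)
    fix z assume "z \<in> S"
    have "cmod (z - \<i>) \<le> cmod z + cmod \<i>" by (rule norm_triangle_ineq4)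
    then show "cmod (z - \<i>) \<le> K0" using M[OF \<open>z \<in> S\<close>] by (simp add: K0_def)
  qed
  define R where "R = 2 * K0 + 1"
  define U where "U = {t. Im t < \<delta>} \<union> {t. R < cmod t}"
  have openU: "open U"
    unfolding U_def by (intro open_Un open_halfspace_Im_lt open_Collect_less continuous_intros)
  have ti: "\<i> - t \<noteq> 0" if "t \<in> U" for t
  proof
    assume "\<i> - t = 0"
    then have "t = \<i>" by simp
    then show False using that \<delta> K0 by (auto simp: U_def R_def)
  qed
  have nz: "(z - t) / (\<i> - t) \<notin> \<real>\<^sub>\<le>\<^sub>0" if z: "z \<in> S" and t: "t \<in> U" for z t
  proof (cases "Im t < \<delta>")
    case True
    then show ?thesis using \<delta>(2) \<delta>(3)[OF z] by (intro ratio_H) auto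
  next
    case False
    then have tR: "R < cmod t" using t by (auto simp: U_def)
    have "cmod t \<le> cmod (\<i> - t) + cmod \<i>" using norm_triangle_ineq4[of "\<i>" "\<i> - t"] by simp
    then have it: "2 * K0 < cmod (\<i> - t)" using tR by (simp add: R_def)
    define u where "u = (z - \<i>) / (\<i> - t)"
    have "cmod u = cmod (z - \<i>) / cmod (\<i> - t)" by (simp add: u_def norm_divide)
    also have "\<dots> \<le> K0 / cmod (\<i> - t)" using K0(2)[OF z] it K0(1) by (intro divide_right_mono) auto
    also have "\<dots> < 1" using it K0(1) by (simp add: divide_less_eq)
    finally have u1: "cmod u < 1" .
    have "(z - t) / (\<i> - t) = 1 + u" using ti[OF t] by (simp add: u_def field_simps)
    moreover have "0 < Re (1 + u)" using u1 abs_Re_le_cmod[of u] by auto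
    ultimately show ?thesis by (auto simp: complex_nonpos_Reals_iff)
  qed
  define G where "G = (\<lambda>t. contour_integral (linepath A B) (\<lambda>z. exp ((r - 2) * Ln ((z - t) / (\<i> - t))) * F z))"
  have Gh: "G holomorphic_on U"
    unfolding G_def
  proof (rule param_holo[where \<phi>' = "\<lambda>z t. (z - \<i>) / (\<i> - t)\<^sup>2"])
    fix z s assume z: "z \<in> closed_segment A B" and s: "s \<in> U"
    have s0: "\<i> - s \<noteq> 0" using ti[OF s] .
    show "((\<lambda>t. (z - t) / (\<i> - t)) has_field_derivative (z - \<i>) / (\<i> - s)\<^sup>2) (at s)"
      using s0 by (auto intro!: derivative_eq_intros simp: power2_eq_square field_simps)
  next
    show "continuous_on (closed_segment A B \<times> U) (\<lambda>p. (fst p - snd p) / (\<i> - snd p))"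
      using ti by (intro continuous_intros) auto
    show "continuous_on (closed_segment A B \<times> U) (\<lambda>p. (fst p - \<i>) / (\<i> - snd p)\<^sup>2)"
      using ti by (intro continuous_intros) auto
  qed (use openU nz cF in \<open>auto simp: S_def\<close>)
  have Geq: "G t = pow_S (\<i> - t) (2 - r) * Iint F r t A B" if t: "t \<in> Lower" for t
  proof -
    have it: "0 < Im (\<i> - t)" using t by (simp add: Lower_def)
    have int: "(\<lambda>z. pow_S (z - t) (r - 2) * F z) contour_integrable_on linepath A B"
      by (rule contour_integrable_holomorphic_simple[OF integrand_holo[OF Fh t] open_Upper])
         (use SU in \<open>auto simp: S_def\<close>)
    have "pow_S (\<i> - t) (2 - r) * Iint F r t A B =
        contour_integral (linepath A B) (\<lambda>z. pow_S (\<i> - t) (2 - r) * (pow_S (z - t) (r - 2) * F z))"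
      unfolding Iint_def by (rule contour_integral_lmul[OF int, symmetric])
    also have "\<dots> = G t" unfolding G_def
    proof (rule contour_integral_cong[OF refl])
      fix z assume "z \<in> path_image (linepath A B)"
      then have zt: "0 < Im (z - t)" using SU t by (auto simp: S_def Upper_def Lower_def)
      have "(r - 2) * Ln ((z - t) / (\<i> - t)) = (2 - r) * Ln (\<i> - t) + (r - 2) * Ln (z - t)"
        by (simp add: Ln_ratio[OF zt it] algebra_simps)
      then show "pow_S (\<i> - t) (2 - r) * (pow_S (z - t) (r - 2) * F z) = exp ((r - 2) * Ln ((z - t) / (\<i> - t))) * F z"
        by (simp add: pow_S_upper[OF it] pow_S_upper[OF zt] exp_add)
    qed
    finally show ?thesis by simp
  qed
  have LU: "Lower \<subseteq> U" using \<delta> by (auto simp: U_def Lower_def)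
  have Jh: "(\<lambda>t. Iint F r t A B) holomorphic_on Lower"
  proof (rule holomorphic_transform)
    show "(\<lambda>t. exp ((r - 2) * Ln (\<i> - t)) * G t) holomorphic_on Lower"
      using holomorphic_on_subset[OF Gh LU]
      by (intro holomorphic_intros) (auto simp: Lower_def complex_nonpos_Reals_iff)
    fix t assume t: "t \<in> Lower"
    have it: "0 < Im (\<i> - t)" using t by (simp add: Lower_def)
    have "exp ((r - 2) * Ln (\<i> - t)) * G t = exp ((r - 2) * Ln (\<i> - t)) * exp ((2 - r) * Ln (\<i> - t)) * Iint F r t A B"
      by (simp add: Geq[OF t] pow_S_upper[OF it])
    also have "exp ((r - 2) * Ln (\<i> - t)) * exp ((2 - r) * Ln (\<i> - t)) = 1"
      by (simp add: exp_add[symmetric] algebra_simps)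
    finally show "exp ((r - 2) * Ln (\<i> - t)) * G t = Iint F r t A B" by simp
  qed
  define \<rho> where "\<rho> = 1 / (2 * K0)"
  define g2 where "g2 = (\<lambda>s. contour_integral (linepath A B) (\<lambda>z. exp ((r - 2) * Ln (1 + (z - \<i>) * s)) * F z))"
  have g2h: "g2 holomorphic_on ball 0 \<rho>"
    unfolding g2_def
  proof (rule param_holo[where \<phi>' = "\<lambda>z s. z - \<i>"])
    fix z s :: complex assume z: "z \<in> closed_segment A B" and s: "s \<in> ball 0 \<rho>"
    show "((\<lambda>s. 1 + (z - \<i>) * s) has_field_derivative z - \<i>) (at s)"
      by (auto intro!: derivative_eq_intros)
    have "cmod ((z - \<i>) * s) = cmod (z - \<i>) * cmod s" by (simp add: norm_mult)
    also have "\<dots> \<le> K0 * cmod s" using K0(2)[of z] z by (intro mult_right_mono) (auto simp: S_def)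
    also have "\<dots> < K0 * \<rho>" using s K0(1) by (intro mult_strict_left_mono) auto
    also have "\<dots> < 1" using K0(1) by (simp add: \<rho>_def)
    finally have "cmod ((z - \<i>) * s) < 1" .
    then have "0 < Re (1 + (z - \<i>) * s)" using abs_Re_le_cmod[of "(z - \<i>) * s"] by auto
    then show "1 + (z - \<i>) * s \<notin> \<real>\<^sub>\<le>\<^sub>0" by (auto simp: complex_nonpos_Reals_iff)
  qed (use cF in \<open>auto intro!: continuous_intros simp: S_def\<close>)
  have "0 < \<rho>" using K0 by (simp add: \<rho>_def)
  then have cg2: "isCont g2 0"
    using continuous_on_eq_continuous_at[OF open_ball, of 0 \<rho> g2] holomorphic_on_imp_continuous_on[OF g2h] by auto
  have "filterlim (\<lambda>t::complex. -\<i> + t) at_infinity at_infinity"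
    by (rule tendsto_add_filterlim_at_infinity[OF tendsto_const filterlim_ident])
  then have "filterlim (\<lambda>t::complex. cmod (-\<i> + t)) at_top at_infinity"
    by (rule filterlim_at_infinity_imp_norm_at_top)
  moreover have "\<And>t. cmod (-\<i> + t) = cmod (\<i> - t)" by (simp add: norm_minus_commute)
  ultimately have "filterlim (\<lambda>t::complex. \<i> - t) at_infinity at_infinity"
    unfolding filterlim_at_infinity_conv_norm_at_top by simp
  then have "((\<lambda>t. 1 / (\<i> - t)) \<longlongrightarrow> 0) at_infinity"
    by (rule tendsto_divide_0[OF tendsto_const])
  then have lim2: "((\<lambda>t. g2 (1 / (\<i> - t))) \<longlongrightarrow> g2 0) at_infinity"
    by (rule isCont_tendsto_compose[OF cg2])
  have ev: "eventually (\<lambda>t. g2 (1 / (\<i> - t)) = G t) at_infinity"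
    unfolding eventually_at_infinity
  proof (intro exI allI impI)
    fix t :: complex assume "2 \<le> norm t"
    then have "t \<noteq> \<i>" by auto
    then have "\<And>z. 1 + (z - \<i>) * (1 / (\<i> - t)) = (z - t) / (\<i> - t)"
      by (simp add: field_simps)
    then show "g2 (1 / (\<i> - t)) = G t" by (simp add: g2_def G_def)
  qed
  have "(G \<longlongrightarrow> g2 0) at_infinity"
    using tendsto_cong[OF ev] lim2 by simp
  then show ?thesis
    unfolding D_omega_def using Jh openU LU Gh Geq \<delta>(1)
    by (intro conjI exI[of _ U] exI[of _ G]) (auto simp: U_def Lower_def)
qed




lemma seg_Upper: "X \<in> Upper \<Longrightarrow> Y \<in> Upper \<Longrightarrow> path_image (linepath X Y) \<subseteq> Upper"
  using closed_segment_subset[OF _ _ convex_Upper] by simp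

lemma Iint_prim:
  assumes "F holomorphic_on Upper" "t \<in> Lower"
  obtains P where "\<And>X Y. X \<in> Upper \<Longrightarrow> Y \<in> Upper \<Longrightarrow> Iint F r t X Y = P Y - P X"
proof -
  obtain P where P: "\<And>x. x \<in> Upper \<Longrightarrow> (P has_field_derivative (pow_S (x - t) (r - 2) * F x)) (at x)"
    using prim_exists[OF integrand_holo[OF assms]] by blast
  show ?thesis using that[of P] integral_prim[OF P] by (simp add: Iint_def)
qed

lemma Iint_lin:
  assumes F: "F holomorphic_on Upper" and G: "G holomorphic_on Upper" and t: "t \<in> Lower"
    and X: "X \<in> Upper" and Y: "Y \<in> Upper"
  shows "Iint (\<lambda>z. a * F z + b * G z) r t X Y = a * Iint F r t X Y + b * Iint G r t X Y"
proof -
  obtain P where P: "\<And>x. x \<in> Upper \<Longrightarrow> (P has_field_derivative (pow_S (x - t) (r - 2) * F x)) (at x)"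
    using prim_exists[OF integrand_holo[OF F t]] by blast
  obtain Q where Q: "\<And>x. x \<in> Upper \<Longrightarrow> (Q has_field_derivative (pow_S (x - t) (r - 2) * G x)) (at x)"
    using prim_exists[OF integrand_holo[OF G t]] by blast
  have PQ: "((\<lambda>w. a * P w + b * Q w) has_field_derivative (pow_S (x - t) (r - 2) * (a * F x + b * G x))) (at x)"
    if "x \<in> Upper" for x
  proof -
    have "((\<lambda>w. a * P w + b * Q w) has_field_derivative
        a * (pow_S (x - t) (r - 2) * F x) + b * (pow_S (x - t) (r - 2) * G x)) (at x)"
      by (intro DERIV_add DERIV_cmult P Q that)
    then show ?thesis by (simp add: algebra_simps)
  qed
  note e1 = integral_prim[OF PQ X Y] and e2 = integral_prim[OF P X Y] and e3 = integral_prim[OF Q X Y]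
  have i1: "Iint (\<lambda>z. a * F z + b * G z) r t X Y = (a * P Y + b * Q Y) - (a * P X + b * Q X)"
    unfolding Iint_def by (rule e1)
  have i2: "Iint F r t X Y = P Y - P X" unfolding Iint_def by (rule e2)
  have i3: "Iint G r t X Y = Q Y - Q X" unfolding Iint_def by (rule e3)
  show ?thesis unfolding i1 i2 i3 by (simp add: algebra_simps)
qed

lemma Iint_poly:
  assumes F: "F holomorphic_on Upper" and k: "2 \<le> k" and r: "r = of_nat k"
    and X: "X \<in> Upper" and Y: "Y \<in> Upper"
  shows "\<exists>p :: complex poly. degree p \<le> k - 2 \<and> (\<forall>t\<in>Lower. Iint F r t X Y = poly p t)"
proof -
  define n where "n = k - 2"
  define c where "c j = of_nat (n choose j) * (-1) ^ j * contour_integral (linepath X Y) (\<lambda>z. z ^ (n - j) * F z)" for j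
  define p where "p = (\<Sum>j\<le>n. monom (c j) j)"
  have deg: "degree p \<le> n"
    unfolding p_def by (rule degree_sum_le) (auto intro: order.trans[OF degree_monom_le])
  have "Iint F r t X Y = poly p t" if t: "t \<in> Lower" for t
  proof -
    have rn: "r - 2 = of_nat n" using k by (simp add: r n_def of_nat_diff)
    have "Iint F r t X Y = contour_integral (linepath X Y)
        (\<lambda>z. \<Sum>j\<le>n. (of_nat (n choose j) * (-t) ^ j) * (z ^ (n - j) * F z))"
      unfolding Iint_def
    proof (rule contour_integral_cong[OF refl])
      fix z assume "z \<in> path_image (linepath X Y)"
      then have zU: "z \<in> Upper" using seg_Upper[OF X Y] by auto
      then have z0: "z - t \<noteq> 0" using t by (auto simp: Upper_def Lower_def)
      have "pow_S (z - t) (r - 2) = (z - t) ^ n"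
        by (simp add: pow_S_LS rn exp_of_nat_mult exp_LS[OF z0])
      also have "\<dots> = (- t + z) ^ n" by simp
      also have "\<dots> = (\<Sum>j\<le>n. of_nat (n choose j) * (- t) ^ j * z ^ (n - j))"
        by (rule binomial_ring)
      finally show "pow_S (z - t) (r - 2) * F z =
          (\<Sum>j\<le>n. (of_nat (n choose j) * (-t) ^ j) * (z ^ (n - j) * F z))"
        by (simp add: sum_distrib_right mult.assoc)
    qed
    also have "\<dots> = (\<Sum>j\<le>n. contour_integral (linepath X Y) (\<lambda>z. (of_nat (n choose j) * (-t) ^ j) * (z ^ (n - j) * F z)))"
    proof (rule contour_integral_sum)
      fix j assume "j \<in> {..n}"
      have "(\<lambda>z. (of_nat (n choose j) * (-t) ^ j) * (z ^ (n - j) * F z)) holomorphic_on Upper"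
        using F by (intro holomorphic_intros)
      then show "(\<lambda>z. (of_nat (n choose j) * (-t) ^ j) * (z ^ (n - j) * F z)) contour_integrable_on linepath X Y"
        by (rule contour_integrable_holomorphic_simple[OF _ open_Upper valid_path_linepath seg_Upper[OF X Y]])
    qed simp
    also have "\<dots> = (\<Sum>j\<le>n. c j * t ^ j)"
    proof (rule sum.cong[OF refl])
      fix j assume "j \<in> {..n}"
      have "(\<lambda>z. z ^ (n - j) * F z) holomorphic_on Upper" using F by (intro holomorphic_intros)
      then have "(\<lambda>z. z ^ (n - j) * F z) contour_integrable_on linepath X Y"
        by (rule contour_integrable_holomorphic_simple[OF _ open_Upper valid_path_linepath seg_Upper[OF X Y]])
      then show "contour_integral (linepath X Y) (\<lambda>z. (of_nat (n choose j) * (-t) ^ j) * (z ^ (n - j) * F z)) = c j * t ^ j"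
        unfolding contour_integral_lmul[OF \<open>(\<lambda>z. z ^ (n - j) * F z) contour_integrable_on linepath X Y\<close>] c_def
        by (simp add: power_minus[of t] algebra_simps)
    qed
    also have "\<dots> = poly p t" by (simp add: p_def poly_sum poly_monom)
    finally show ?thesis .
  qed
  then show ?thesis using deg by (auto simp: n_def)
qed

lemma D_omega_zero: "D_omega r (\<lambda>_. 0)"
  unfolding D_omega_def
  by (intro conjI exI[of _ UNIV] exI[of _ "\<lambda>_. 0"]) (auto intro: holomorphic_intros)


theorem proposition2p4:
  fixes \<Gamma> :: "mat2 set" and r :: complex and v :: "mat2 \<Rightarrow> complex"
    and z0 :: complex and F :: "complex \<Rightarrow> complex"
  assumes "discrete_subgroup_SL2 \<Gamma>" and "mneg I2 \<in> \<Gamma>" and "cofinite \<Gamma>" and "has_cusps \<Gamma>"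
    and "multiplier_system \<Gamma> r v" and "z0 \<in> Upper" and "A_r \<Gamma> v r F"
  shows "cocycle (D_omega r) \<Gamma> v r (psi z0 F r)
    \<and> (\<forall>z1\<in>Upper. coboundary (D_omega r) \<Gamma> v r (\<lambda>g t. psi z0 F r g t - psi z1 F r g t))
    \<and> (\<forall>G a b. A_r \<Gamma> v r G \<longrightarrow>
         coboundary (D_omega r) \<Gamma> v r
           (\<lambda>g t. psi z0 (\<lambda>z. a * F z + b * G z) r g t - (a * psi z0 F r g t + b * psi z0 G r g t)))
    \<and> (\<forall>k::nat. 2 \<le> k \<and> r = of_nat k \<longrightarrow>
         (\<exists>c. cocycle (D_pol (k - 2)) \<Gamma> v r c \<and>
              coboundary (D_omega r) \<Gamma> v r (\<lambda>g t. psi z0 F r g t - c g t)))"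
proof -
  have det: "\<And>g. g \<in> \<Gamma> \<Longrightarrow> mdet g = 1"
    and mul: "\<And>g h. g \<in> \<Gamma> \<Longrightarrow> h \<in> \<Gamma> \<Longrightarrow> mmul g h \<in> \<Gamma>"
    using assms(1) by (auto simp: discrete_subgroup_SL2_def)
  have vnz: "\<And>g. g \<in> \<Gamma> \<Longrightarrow> v g \<noteq> 0" using assms(5) by (simp add: multiplier_system_def)
  have Fh: "F holomorphic_on Upper"
    and FA: "\<And>g z. g \<in> \<Gamma> \<Longrightarrow> z \<in> Upper \<Longrightarrow> inverse (v g) * pow_H (cdf g z) (- r) * F (moeb g z) = F z"
    using assms(7) by (auto simp: A_r_def)
  have z0: "z0 \<in> Upper" by (rule assms(6))
  have mU: "\<And>g z. g \<in> \<Gamma> \<Longrightarrow> z \<in> Upper \<Longrightarrow> moeb (minv g) z \<in> Upper"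
    using moeb_Upper det mdet_minv by metis
  have keyG: "inverse (v h) * pow_L (cdf h t) (r - 2) * Iint F r (moeb h t) A B
      = Iint F r t (moeb (minv h) A) (moeb (minv h) B)"
    if "h \<in> \<Gamma>" "t \<in> Lower" "A \<in> Upper" "B \<in> Upper" for h t A B
    by (rule key[of h v r F, OF det[OF that(1)] vnz[OF that(1)] FA[OF that(1)] Fh that(2-4)])
  have psiD: "D_omega r (psi w F r g)" if "w \<in> Upper" "g \<in> \<Gamma>" for w g
  proof -
    have "psi w F r g = (\<lambda>t. Iint F r t (moeb (minv g) w) w)" by (rule ext) (simp add: psi_Iint)
    then show ?thesis using D_omega_Iint[OF Fh mU[OF that(2,1)] that(1)] by simp
  qed
  have cocyc: "psi z0 F r (mmul g h) t = slash v r (psi z0 F r g) h t + psi z0 F r h t"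
    if g: "g \<in> \<Gamma>" and h: "h \<in> \<Gamma>" and t: "t \<in> Lower" for g h t
  proof -
    obtain P where P: "\<And>X Y. X \<in> Upper \<Longrightarrow> Y \<in> Upper \<Longrightarrow> Iint F r t X Y = P Y - P X"
      using Iint_prim[OF Fh t] by blast
    define a where "a = moeb (minv g) z0"
    have aU: "a \<in> Upper" using mU[OF g z0] by (simp add: a_def)
    have "slash v r (psi z0 F r g) h t = Iint F r t (moeb (minv h) a) (moeb (minv h) z0)"
      unfolding slash_def psi_Iint a_def[symmetric] by (rule keyG[OF h t aU z0])
    also have "\<dots> = P (moeb (minv h) z0) - P (moeb (minv h) a)" by (rule P[OF mU[OF h aU] mU[OF h z0]])
    finally have s1: "slash v r (psi z0 F r g) h t = P (moeb (minv h) z0) - P (moeb (minv h) a)" .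
    have s2: "psi z0 F r h t = P z0 - P (moeb (minv h) z0)"
      unfolding psi_Iint by (rule P[OF mU[OF h z0] z0])
    have "moeb (minv (mmul g h)) z0 = moeb (mmul (minv h) (minv g)) z0" by (simp add: minv_mmul)
    also have "\<dots> = moeb (minv h) a"
      unfolding a_def using det[OF g] det[OF h] z0
      by (intro moeb_mmul) (auto simp: mdet_minv Upper_def)
    finally have "psi z0 F r (mmul g h) t = P z0 - P (moeb (minv h) a)"
      unfolding psi_Iint using P[OF mU[OF h aU] z0] by simp
    then show ?thesis using s1 s2 by simp
  qed
  have part1: "cocycle (D_omega r) \<Gamma> v r (psi z0 F r)"
    unfolding cocycle_def using psiD[OF z0] cocyc by blast
  have part2: "coboundary (D_omega r) \<Gamma> v r (\<lambda>g t. psi z0 F r g t - psi z1 F r g t)"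
    if z1: "z1 \<in> Upper" for z1
    unfolding coboundary_def
  proof (intro exI[of _ "\<lambda>t. Iint F r t z0 z1"] conjI ballI)
    show "D_omega r (\<lambda>t. Iint F r t z0 z1)" by (rule D_omega_Iint[OF Fh z0 z1])
    fix g t assume g: "g \<in> \<Gamma>" and t: "t \<in> Lower"
    obtain P where P: "\<And>X Y. X \<in> Upper \<Longrightarrow> Y \<in> Upper \<Longrightarrow> Iint F r t X Y = P Y - P X"
      using Iint_prim[OF Fh t] by blast
    have "slash v r (\<lambda>t. Iint F r t z0 z1) g t = Iint F r t (moeb (minv g) z0) (moeb (minv g) z1)"
      unfolding slash_def by (rule keyG[OF g t z0 z1])
    then show "psi z0 F r g t - psi z1 F r g t = slash v r (\<lambda>t. Iint F r t z0 z1) g t - Iint F r t z0 z1"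
      unfolding psi_Iint using P[OF mU[OF g z0] z0] P[OF mU[OF g z1] z1] P[OF mU[OF g z0] mU[OF g z1]] P[OF z0 z1]
      by simp
  qed
  have part3: "coboundary (D_omega r) \<Gamma> v r
       (\<lambda>g t. psi z0 (\<lambda>z. a * F z + b * G z) r g t - (a * psi z0 F r g t + b * psi z0 G r g t))"
    if G: "A_r \<Gamma> v r G" for G a b
    unfolding coboundary_def
  proof (intro exI[of _ "\<lambda>_. 0"] conjI ballI)
    show "D_omega r (\<lambda>_. 0)" by (rule D_omega_zero)
    have Gh: "G holomorphic_on Upper" using G by (simp add: A_r_def)
    fix g t assume g: "g \<in> \<Gamma>" and t: "t \<in> Lower"
    show "psi z0 (\<lambda>z. a * F z + b * G z) r g t - (a * psi z0 F r g t + b * psi z0 G r g t) =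
        slash v r (\<lambda>_. 0) g t - 0"
      unfolding psi_Iint using Iint_lin[OF Fh Gh t mU[OF g z0] z0, of a b] by (simp add: slash_def)
  qed
  have part4: "\<exists>c. cocycle (D_pol (k - 2)) \<Gamma> v r c \<and>
              coboundary (D_omega r) \<Gamma> v r (\<lambda>g t. psi z0 F r g t - c g t)"
    if k: "2 \<le> k \<and> r = of_nat k" for k :: nat
  proof (intro exI[of _ "psi z0 F r"] conjI)
    show "cocycle (D_pol (k - 2)) \<Gamma> v r (psi z0 F r)"
      unfolding cocycle_def
    proof (intro conjI ballI)
      fix g assume g: "g \<in> \<Gamma>"
      show "D_pol (k - 2) (psi z0 F r g)"
        unfolding D_pol_def psi_Iint using Iint_poly[OF Fh _ _ mU[OF g z0] z0] k by blast
    qed (use cocyc in auto)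
    show "coboundary (D_omega r) \<Gamma> v r (\<lambda>g t. psi z0 F r g t - psi z0 F r g t)"
      unfolding coboundary_def
      by (intro exI[of _ "\<lambda>_. 0"] conjI ballI D_omega_zero) (simp add: slash_def)
  qed
  show ?thesis using part1 part2 part3 part4 by blast
qed

end
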